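(* Let $\Lambda_2,\Lambda_3,\Lambda_4\in\mathbb C$, $\Lambda_4\neq0$, and let $\mathcal V^{[2]}$, $v_\lambda$, $\widetilde L_n$, $\widetilde{\mathbf L}_\mu$, $\deg_\delta$ be as in the context. Let $\delta=1$, or $\delta=2$ under the additional assumption $\Lambda_3=0$. Then for all partitions $\lambda,\mu$: (a) if $j\ge1$ and $\widetilde L_{2+j}v_\lambda\ne0$, then $\deg_\delta\big(\widetilde L_{2+j}v_\lambda\big)\le\deg_\delta v_\lambda-\deg_\delta L_{2-j}$; (b) if $\deg_\delta v_\mu>\deg_\delta v_\lambda$, then $\widetilde{\mathbf L}_\mu v_\lambda=0$.
   Context: $\mathcal V^{[2]}$ is the Virasoro Whittaker module generated by $|J\rangle$ with $L_n|J\rangle=\Lambda_n|J\rangle$ ($n=2,3,4$), $L_n|J\rangle=0$ ($n>4$). Basis $v_\lambda=\mathbf L_{-\lambda}|J\rangle$, $\mathbf L_{-\lambda}=L_{-\lambda_1+2}\cdots L_{-\lambda_\ell+2}$ for partitions $\lambda=(\lambda_1\ge\dots\ge\lambda_\ell\ge1)$, $v_\emptyset=|J\rangle$. $\widetilde L_n=L_n-\Lambda_n$ for $n=3,4$, $\widetilde L_n=L_n$ for $n>4$; $\widetilde{\mathbf L}_\mu=\widetilde L_{\mu_1+2}\cdots\widetilde L_{\mu_m+2}$. Degrees: $\deg_\delta L_{-k}=k$ ($k>0$), $\deg_\delta L_0=\delta$, $\deg_\delta L_1=1$, so that for $\lambda=(\cdots3^{n_3}2^{n_2}1^{n_1})$,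 $\deg_\delta v_\lambda=n_1+\delta n_2+\sum_{k>2}n_k(k-2)$; the degree of a nonzero vector $v=\sum c_\lambda v_\lambda$ is the maximum of $\deg_\delta v_\lambda$ over $\lambda$ with $c_\lambda\neq0$. *)

theory Defs
  imports Complex_Main
begin

text \<open>Vectors of the Whittaker module are coordinate functions on the basis
  v_lambda, i.e. functions from partitions to complex numbers with finite support.\<close>

definition is_partition :: "nat list \<Rightarrow> bool" where
  "is_partition lam \<longleftrightarrow> sorted_wrt (\<ge>) lam \<and> (\<forall>k\<in>set lam. 1 \<le> k)"

type_synonym vec = "nat list \<Rightarrow> complex"

definition fin_vec :: "vec \<Rightarrow> bool" where
  "fin_vec x \<longleftrightarrow> finite {mu. x mu \<noteq> 0} \<and> (\<forall>mu. x mu \<noteq> 0 \<longrightarrow> is_partition mu)"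

text \<open>basis vector v_lambda; v [] is the Whittaker vector J\<close>
definition bvec :: "nat list \<Rightarrow> vec" where
  "bvec lam = (\<lambda>mu. if mu = lam then 1 else 0)"

text \<open>These conditions determine L uniquely.\<close>
definition whittaker_module ::
  "complex \<Rightarrow> complex \<Rightarrow> complex \<Rightarrow> complex \<Rightarrow> (int \<Rightarrow> vec \<Rightarrow> vec) \<Rightarrow> bool" where
  "whittaker_module c La2 La3 La4 L \<longleftrightarrow>
     (\<forall>n x. fin_vec x \<longrightarrow> fin_vec (L n x)) \<and>
     (\<forall>n x y. fin_vec x \<longrightarrow> fin_vec y \<longrightarrow> L n (\<lambda>mu. x mu + y mu) = (\<lambda>mu. L n x mu + L n y mu)) \<and>
     (\<forall>n a x. fin_vec x \<longrightarrow> L n (\<lambda>mu. a * x mu) = (\<lambda>mu. a * L n x mu)) \<and>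
     (\<forall>m n x. fin_vec x \<longrightarrow>
        (\<lambda>mu. L m (L n x) mu - L n (L m x) mu) =
        (\<lambda>mu. of_int (m - n) * L (m + n) x mu
              + (if m + n = 0 then c / 12 * (of_int m ^ 3 - of_int m) * x mu else 0))) \<and>
     L 2 (bvec []) = (\<lambda>mu. La2 * bvec [] mu) \<and>
     L 3 (bvec []) = (\<lambda>mu. La3 * bvec [] mu) \<and>
     L 4 (bvec []) = (\<lambda>mu. La4 * bvec [] mu) \<and>
     (\<forall>n > 4. L n (bvec []) = (\<lambda>mu. 0)) \<and>
     (\<forall>lam. is_partition lam \<longrightarrow> foldr (\<lambda>k x. L (2 - int k) x) lam (bvec []) = bvec lam)"

definition Lt :: "complex \<Rightarrow> complex \<Rightarrow> (int \<Rightarrow> vec \<Rightarrow> vec) \<Rightarrow> int \<Rightarrow> vec \<Rightarrow> vec" where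
  "Lt La3 La4 L n x =
     (if n = 3 then (\<lambda>mu. L 3 x mu - La3 * x mu)
      else if n = 4 then (\<lambda>mu. L 4 x mu - La4 * x mu)
      else L n x)"

definition Lt_prod :: "complex \<Rightarrow> complex \<Rightarrow> (int \<Rightarrow> vec \<Rightarrow> vec) \<Rightarrow> nat list \<Rightarrow> vec \<Rightarrow> vec" where
  "Lt_prod La3 La4 L mu x = foldr (\<lambda>k y. Lt La3 La4 L (int k + 2) y) mu x"

text \<open>deg_delta of a part k (= deg_delta of L_{2-k}): 1 for k=1, delta for k=2, k-2 for k>2\<close>
definition degpart :: "nat \<Rightarrow> nat \<Rightarrow> int" where
  "degpart d k = (if k = 1 then 1 else if k = 2 then int d else int k - 2)"

definition degp :: "nat \<Rightarrow> nat list \<Rightarrow> int" where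
  "degp d lam = sum_list (map (degpart d) lam)"

definition vdeg :: "nat \<Rightarrow> vec \<Rightarrow> int" where
  "vdeg d x = Max (degp d ` {mu. x mu \<noteq> 0})"

end

theory Submission
  imports Defs
begin


definition FF :: "nat \<Rightarrow> int \<Rightarrow> vec \<Rightarrow> bool" where
  "FF d D x \<longleftrightarrow> fin_vec x \<and> (\<forall>mu. x mu \<noteq> 0 \<longrightarrow> degp d mu \<le> D)"

lemma fin_vec_zero: "fin_vec (\<lambda>mu. 0)"
  by (simp add: fin_vec_def)

lemma fin_vec_add: "fin_vec x \<Longrightarrow> fin_vec y \<Longrightarrow> fin_vec (\<lambda>mu. x mu + y mu)"
  unfolding fin_vec_def
proof (intro conjI)
  assume a: "finite {mu. x mu \<noteq> 0} \<and> (\<forall>mu. x mu \<noteq> 0 \<longrightarrow> is_partition mu)"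
     "finite {mu. y mu \<noteq> 0} \<and> (\<forall>mu. y mu \<noteq> 0 \<longrightarrow> is_partition mu)"
  have "{mu. x mu + y mu \<noteq> 0} \<subseteq> {mu. x mu \<noteq> 0} \<union> {mu. y mu \<noteq> 0}" by auto
  then show "finite {mu. x mu + y mu \<noteq> 0}" using a by (meson finite_Un finite_subset)
  show "\<forall>mu. x mu + y mu \<noteq> 0 \<longrightarrow> is_partition mu"
  proof (intro allI impI)
    fix mu assume "x mu + y mu \<noteq> 0"
    then have "x mu \<noteq> 0 \<or> y mu \<noteq> 0" by auto
    then show "is_partition mu" using a by blast
  qed
qed

lemma fin_vec_scale: "fin_vec x \<Longrightarrow> fin_vec (\<lambda>mu. a * x mu)"
  unfolding fin_vec_def
proof (intro conjI)
  assume a: "finite {mu. x mu \<noteq> 0} \<and> (\<forall>mu. x mu \<noteq> 0 \<longrightarrow> is_partition mu)"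
  have "{mu. a * x mu \<noteq> 0} \<subseteq> {mu. x mu \<noteq> 0}" by auto
  then show "finite {mu. a * x mu \<noteq> 0}" using a by (meson finite_subset)
  show "\<forall>mu. a * x mu \<noteq> 0 \<longrightarrow> is_partition mu" using a by fastforce
qed

lemma fin_vec_bvec: "is_partition lam \<Longrightarrow> fin_vec (bvec lam)"
proof -
  assume "is_partition lam"
  moreover have "{mu. bvec lam mu \<noteq> 0} = {lam}" by (auto simp: bvec_def)
  ultimately show ?thesis unfolding fin_vec_def by (simp add: bvec_def)
qed

lemma FF_zero: "FF d D (\<lambda>mu. 0)"
  by (simp add: FF_def fin_vec_zero)

lemma FF_add: "FF d D x \<Longrightarrow> FF d D y \<Longrightarrow> FF d D (\<lambda>mu. x mu + y mu)"
  unfolding FF_def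
proof (intro conjI allI impI)
  fix mu assume a: "fin_vec x \<and> (\<forall>mu. x mu \<noteq> 0 \<longrightarrow> degp d mu \<le> D)"
    "fin_vec y \<and> (\<forall>mu. y mu \<noteq> 0 \<longrightarrow> degp d mu \<le> D)" and "x mu + y mu \<noteq> 0"
  then have "x mu \<noteq> 0 \<or> y mu \<noteq> 0" by auto
  then show "degp d mu \<le> D" using a by blast
next
  assume a: "fin_vec x \<and> (\<forall>mu. x mu \<noteq> 0 \<longrightarrow> degp d mu \<le> D)"
    "fin_vec y \<and> (\<forall>mu. y mu \<noteq> 0 \<longrightarrow> degp d mu \<le> D)"
  then show "fin_vec (\<lambda>mu. x mu + y mu)" using fin_vec_add by blast
qed

lemma FF_scale: "FF d D x \<Longrightarrow> FF d D (\<lambda>mu. a * x mu)"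
  unfolding FF_def using fin_vec_scale by (metis mult_zero_right)

lemma FF_mono: "FF d D x \<Longrightarrow> D \<le> D' \<Longrightarrow> FF d D' x"
  unfolding FF_def by (meson order_trans)

lemma FF_bvec: "is_partition lam \<Longrightarrow> degp d lam \<le> D \<Longrightarrow> FF d D (bvec lam)"
  unfolding FF_def using fin_vec_bvec by (simp add: bvec_def)

definition lin :: "(vec \<Rightarrow> vec) \<Rightarrow> bool" where
  "lin T \<longleftrightarrow> (\<forall>x. fin_vec x \<longrightarrow> fin_vec (T x)) \<and>
     (\<forall>x y. fin_vec x \<longrightarrow> fin_vec y \<longrightarrow> T (\<lambda>mu. x mu + y mu) = (\<lambda>mu. T x mu + T y mu)) \<and>
     (\<forall>a x. fin_vec x \<longrightarrow> T (\<lambda>mu. a * x mu) = (\<lambda>mu. a * T x mu))"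

lemma lin_fin: "lin T \<Longrightarrow> fin_vec x \<Longrightarrow> fin_vec (T x)"
  unfolding lin_def by blast
lemma lin_add: "lin T \<Longrightarrow> fin_vec x \<Longrightarrow> fin_vec y \<Longrightarrow> T (\<lambda>mu. x mu + y mu) = (\<lambda>mu. T x mu + T y mu)"
  unfolding lin_def by blast
lemma lin_scale: "lin T \<Longrightarrow> fin_vec x \<Longrightarrow> T (\<lambda>mu. a * x mu) = (\<lambda>mu. a * T x mu)"
  unfolding lin_def by blast

lemma lin_zero: "lin T \<Longrightarrow> T (\<lambda>mu. 0) = (\<lambda>mu. 0)"
proof -
  assume "lin T"
  then have "T (\<lambda>mu. 0 * (0::complex)) = (\<lambda>mu. 0 * T (\<lambda>mu. 0) mu)"
    unfolding lin_def using fin_vec_zero by blast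
  then show ?thesis by simp
qed

lemma lin_F:
  assumes T: "lin T" and x: "FF d D x"
    and H: "\<And>nu. is_partition nu \<Longrightarrow> degp d nu \<le> D \<Longrightarrow> FF d (degp d nu + e) (T (bvec nu))"
  shows "FF d (D + e) (T x)"
proof -
  have "\<forall>x. card {mu. x mu \<noteq> 0} = N \<longrightarrow> FF d D x \<longrightarrow> FF d (D + e) (T x)" for N
  proof (induction N rule: less_induct)
    case (less N)
    show ?case
    proof (intro allI impI)
      fix x assume cx: "card {mu. x mu \<noteq> 0} = N" and Fx: "FF d D x"
      have fx: "fin_vec x" using Fx by (simp add: FF_def)
      show "FF d (D + e) (T x)"
      proof (cases "\<exists>mu. x mu \<noteq> 0")
        case False
        then have "x = (\<lambda>mu. 0)" by auto
        then show ?thesis using lin_zero[OF T] FF_zero by simp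
      next
        case True
        then obtain m0 where m0: "x m0 \<noteq> 0" by blast
        define x' where "x' = x(m0 := 0)"
        have fin: "finite {mu. x mu \<noteq> 0}" using fx by (simp add: fin_vec_def)
        have sub: "{mu. x' mu \<noteq> 0} = {mu. x mu \<noteq> 0} - {m0}" by (auto simp: x'_def)
        have "m0 \<in> {mu. x mu \<noteq> 0}" using m0 by simp
        then have lt: "card {mu. x' mu \<noteq> 0} < N"
          using cx sub fin by (metis card_Diff1_less)
        have supp: "x' mu \<noteq> 0 \<Longrightarrow> x mu \<noteq> 0" for mu by (simp add: x'_def split: if_splits)
        have Fx': "FF d D x'" unfolding FF_def fin_vec_def
          using Fx supp sub fin unfolding FF_def fin_vec_def by (metis finite_Diff)
        have fx': "fin_vec x'" using Fx' by (simp add: FF_def)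
        have pm0: "is_partition m0" "degp d m0 \<le> D" using Fx m0 unfolding FF_def fin_vec_def by blast+
        have fb: "fin_vec (bvec m0)" using fin_vec_bvec pm0 by blast
        have xe: "x = (\<lambda>mu. x' mu + x m0 * bvec m0 mu)"
          by (rule ext) (simp add: x'_def bvec_def)
        have "T x = T (\<lambda>mu. x' mu + x m0 * bvec m0 mu)"
          by (rule arg_cong[where f=T, OF xe])
        also have "\<dots> = (\<lambda>mu. T x' mu + T (\<lambda>mu. x m0 * bvec m0 mu) mu)"
          by (rule lin_add[OF T fx' fin_vec_scale[OF fb]])
        also have "\<dots> = (\<lambda>mu. T x' mu + x m0 * T (bvec m0) mu)"
          by (simp add: lin_scale[OF T fb])
        finally have Tx: "T x = (\<lambda>mu. T x' mu + x m0 * T (bvec m0) mu)" .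
        have "FF d (D + e) (T x')" by (rule less.IH[OF lt, rule_format, OF refl Fx'])
        moreover have "FF d (D + e) (T (bvec m0))"
          by (rule FF_mono[OF H[OF pm0]]) (simp add: pm0)
        ultimately show ?thesis unfolding Tx by (intro FF_add FF_scale)
      qed
    qed
  qed
  then show ?thesis using x by blast
qed



definition dg :: "nat \<Rightarrow> int \<Rightarrow> int" where
  "dg d n = (if n = 1 then 1 else if n = 0 then int d else - n)"
definition dd :: "nat \<Rightarrow> int \<Rightarrow> int" where
  "dd d m = (if m = 2 then 0 else if m = 3 then 1 else if m = 4 then int d else m - 4)"
definition LamF :: "complex \<Rightarrow> complex \<Rightarrow> complex \<Rightarrow> int \<Rightarrow> complex" where
  "LamF La2 La3 La4 m = (if m = 2 then La2 else if m = 3 then La3 else if m = 4 then La4 else 0)"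

lemma is_partition_Cons:
  "is_partition (k # mu) \<longleftrightarrow> is_partition mu \<and> 1 \<le> k \<and> (\<forall>x\<in>set mu. x \<le> k)"
  unfolding is_partition_def by auto

lemma degp_Cons: "degp d (k # mu) = degpart d k + degp d mu"
  by (simp add: degp_def)

lemma degpart_dg: "1 \<le> k \<Longrightarrow> degpart d k = dg d (2 - int k)"
  by (simp add: degpart_def dg_def)

lemma degp_nonneg: "is_partition mu \<Longrightarrow> 0 \<le> degp d mu"
proof (induction mu)
  case Nil then show ?case by (simp add: degp_def)
next
  case (Cons k mu)
  then have "is_partition mu" "1 \<le> k" by (auto simp: is_partition_Cons)
  then show ?case using Cons.IH by (auto simp: degp_Cons degpart_def)
qed

lemma dg_ge1: "d \<ge> 1 \<Longrightarrow> n \<le> 1 \<Longrightarrow> 1 \<le> dg d n"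
  by (auto simp: dg_def)

lemma dg_ge: "d \<ge> 1 \<Longrightarrow> n \<le> 1 \<Longrightarrow> - n \<le> dg d n"
  by (auto simp: dg_def)

lemma dg_comm: "d = 1 \<or> d = 2 \<Longrightarrow> n \<le> 1 \<Longrightarrow> a < n \<Longrightarrow>
   dg d (n + a) \<le> dg d n + dg d a \<and> (dg d (n + a) = dg d n + dg d a \<longrightarrow> a < 0)"
  by (auto simp: dg_def)

lemma fin_vec_diff: "fin_vec x \<Longrightarrow> fin_vec y \<Longrightarrow> fin_vec (\<lambda>mu. x mu - y mu)"
proof -
  assume "fin_vec x" "fin_vec y"
  then have "fin_vec (\<lambda>mu. x mu + (-1) * y mu)" by (intro fin_vec_add fin_vec_scale)
  then show ?thesis by simp
qed

lemma lin_sub: "lin T \<Longrightarrow> lin (\<lambda>x mu. T x mu - a * x mu)"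
  unfolding lin_def
proof (intro conjI allI impI)
  assume T: "(\<forall>x. fin_vec x \<longrightarrow> fin_vec (T x)) \<and>
    (\<forall>x y. fin_vec x \<longrightarrow> fin_vec y \<longrightarrow> T (\<lambda>mu. x mu + y mu) = (\<lambda>mu. T x mu + T y mu)) \<and>
    (\<forall>a x. fin_vec x \<longrightarrow> T (\<lambda>mu. a * x mu) = (\<lambda>mu. a * T x mu))"
  fix x assume "fin_vec x"
  then show "fin_vec (\<lambda>mu. T x mu - a * x mu)" using T by (intro fin_vec_diff fin_vec_scale) blast+
next
  assume T: "(\<forall>x. fin_vec x \<longrightarrow> fin_vec (T x)) \<and>
    (\<forall>x y. fin_vec x \<longrightarrow> fin_vec y \<longrightarrow> T (\<lambda>mu. x mu + y mu) = (\<lambda>mu. T x mu + T y mu)) \<and>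
    (\<forall>a x. fin_vec x \<longrightarrow> T (\<lambda>mu. a * x mu) = (\<lambda>mu. a * T x mu))"
  fix x y assume "fin_vec x" "fin_vec y"
  then have "T (\<lambda>mu. x mu + y mu) = (\<lambda>mu. T x mu + T y mu)" using T by blast
  then show "(\<lambda>mu. T (\<lambda>mu. x mu + y mu) mu - a * (x mu + y mu)) =
       (\<lambda>mu. (T x mu - a * x mu) + (T y mu - a * y mu))"
    by (simp add: algebra_simps)
next
  assume T: "(\<forall>x. fin_vec x \<longrightarrow> fin_vec (T x)) \<and>
    (\<forall>x y. fin_vec x \<longrightarrow> fin_vec y \<longrightarrow> T (\<lambda>mu. x mu + y mu) = (\<lambda>mu. T x mu + T y mu)) \<and>
    (\<forall>a x. fin_vec x \<longrightarrow> T (\<lambda>mu. a * x mu) = (\<lambda>mu. a * T x mu))"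
  fix b x assume "fin_vec x"
  then have "T (\<lambda>mu. b * x mu) = (\<lambda>mu. b * T x mu)" using T by blast
  then show "(\<lambda>mu. T (\<lambda>mu. b * x mu) mu - a * (b * x mu)) = (\<lambda>mu. b * (T x mu - a * x mu))"
    by (simp add: algebra_simps)
qed

lemma FF_zero_neg: "FF d D x \<Longrightarrow> D < 0 \<Longrightarrow> x = (\<lambda>mu. 0)"
proof (rule ext, rule ccontr)
  fix mu assume "FF d D x" "D < 0" "x mu \<noteq> 0"
  then have "is_partition mu" "degp d mu \<le> D" by (auto simp: FF_def fin_vec_def)
  then show False using degp_nonneg[of mu d] \<open>D < 0\<close> by simp
qed

context
  fixes c La2 La3 La4 :: complex and L :: "int \<Rightarrow> vec \<Rightarrow> vec" and d :: nat
  assumes W: "whittaker_module c La2 La3 La4 L" and Dh: "d = 1 \<or> (d = 2 \<and> La3 = 0)"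
begin

lemma d12: "d = 1 \<or> d = 2" using Dh by blast
lemma d1: "1 \<le> d" using Dh by auto

lemma linL: "lin (L n)"
  using W unfolding whittaker_module_def lin_def by blast

lemma comm: "fin_vec x \<Longrightarrow> L m (L n x) = (\<lambda>mu. L n (L m x) mu + of_int (m - n) * L (m + n) x mu
   + (if m + n = 0 then c / 12 * (of_int m ^ 3 - of_int m) else 0) * x mu)"
proof -
  assume x: "fin_vec x"
  have h: "(\<lambda>mu. L m (L n x) mu - L n (L m x) mu) =
        (\<lambda>mu. of_int (m - n) * L (m + n) x mu
              + (if m + n = 0 then c / 12 * (of_int m ^ 3 - of_int m) * x mu else 0))"
    using W x unfolding whittaker_module_def by blast
    show ?thesis
    proof (rule ext)
      fix mu
      have "L m (L n x) mu - L n (L m x) mu = of_int (m - n) * L (m + n) x mu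
              + (if m + n = 0 then c / 12 * (of_int m ^ 3 - of_int m) * x mu else 0)"
        using fun_cong[OF h, of mu] by simp
      then show "L m (L n x) mu = L n (L m x) mu + of_int (m - n) * L (m + n) x mu
   + (if m + n = 0 then c / 12 * (of_int m ^ 3 - of_int m) else 0) * x mu"
        by (simp add: algebra_simps split: if_splits)
    qed
qed

lemma bvec_Cons: "is_partition (k # mu) \<Longrightarrow> bvec (k # mu) = L (2 - int k) (bvec mu)"
proof -
  assume p: "is_partition (k # mu)"
  then have pm: "is_partition mu" by (simp add: is_partition_Cons)
  have f: "\<forall>lam. is_partition lam \<longrightarrow> foldr (\<lambda>k x. L (2 - int k) x) lam (bvec []) = bvec lam"
    using W unfolding whittaker_module_def by blast
  have "foldr (\<lambda>k x. L (2 - int k) x) (k # mu) (bvec []) = bvec (k # mu)" using f p by blast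
  then have "bvec (k # mu) = foldr (\<lambda>k x. L (2 - int k) x) (k # mu) (bvec [])" by simp
  also have "\<dots> = L (2 - int k) (foldr (\<lambda>k x. L (2 - int k) x) mu (bvec []))" by simp
  also have "\<dots> = L (2 - int k) (bvec mu)" using f pm by simp
  finally show ?thesis .
qed

lemma LJ: "2 \<le> m \<Longrightarrow> L m (bvec []) = (\<lambda>mu. LamF La2 La3 La4 m * bvec [] mu)"
  using W unfolding whittaker_module_def LamF_def by auto


lemma R_basis: "is_partition mu \<Longrightarrow> n \<le> 1 \<Longrightarrow> FF d (degp d mu + dg d n) (L n (bvec mu))"
proof -
  have main: "\<forall>n mu. is_partition mu \<longrightarrow> n \<le> 1 \<longrightarrow> degp d mu + dg d n = int T
     \<longrightarrow> FF d (int T) (L n (bvec mu))" for T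
  proof (induction T rule: less_induct)
    case (less T)
    note outerIH = less.IH
    have inner: "\<forall>n mu. is_partition mu \<longrightarrow> n \<le> 1 \<longrightarrow> degp d mu + dg d n = int T
       \<longrightarrow> nat (n + int T) = K \<longrightarrow> FF d (int T) (L n (bvec mu))" for K
    proof (induction K rule: less_induct)
      case (less K)
      show ?case
      proof (intro allI impI)
        fix n mu assume mu: "is_partition mu" and n1: "n \<le> 1"
          and dT: "degp d mu + dg d n = int T" and K: "nat (n + int T) = K"
        have IH: "FF d (degp d nu + dg d n') (L n' (bvec nu))"
          if nu: "is_partition nu" and n': "n' \<le> 1" and le: "degp d nu + dg d n' \<le> int T"
            and eqc: "degp d nu + dg d n' = int T \<Longrightarrow> n' < n" for n' nu
        proof (cases "degp d nu + dg d n' = int T")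
          case True
          then have "n' < n" using eqc by blast
          moreover have "0 \<le> n' + int T"
            using True degp_nonneg[OF nu, of d] dg_ge[OF d1 n'] by linarith
          moreover have "0 \<le> n + int T"
            using dT degp_nonneg[OF mu, of d] dg_ge[OF d1 n1] by linarith
          ultimately have "nat (n' + int T) < K" using K by linarith
          then show ?thesis using less.IH[of "nat (n' + int T)"] nu n' True by simp
        next
          case False
          have pos: "0 \<le> degp d nu + dg d n'"
            using degp_nonneg[OF nu, of d] dg_ge1[OF d1 n'] by linarith
          then have "nat (degp d nu + dg d n') < T" using False le by linarith
          then have "\<forall>n mu. is_partition mu \<longrightarrow> n \<le> 1 \<longrightarrow> degp d mu + dg d n = int (nat (degp d nu + dg d n'))
             \<longrightarrow> FF d (int (nat (degp d nu + dg d n'))) (L n (bvec mu))"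
            by (rule outerIH)
          then show ?thesis using nu n' pos by simp
        qed
        show "FF d (int T) (L n (bvec mu))"
        proof (cases "mu = [] \<or> n \<le> 2 - int (hd mu)")
          case True
          define k where "k = nat (2 - n)"
          have ik: "int k = 2 - n" using n1 by (simp add: k_def)
          have k1: "1 \<le> k" using n1 by (simp add: k_def)
          have pk: "is_partition (k # mu)"
          proof (cases mu)
            case Nil then show ?thesis using k1 by (simp add: is_partition_Cons is_partition_def)
          next
            case (Cons h t)
            then have "h \<le> k" using True ik by auto
            moreover have "\<forall>x\<in>set t. x \<le> h" using mu Cons by (simp add: is_partition_Cons)
            ultimately show ?thesis using mu Cons k1 by (auto simp: is_partition_Cons)
          qed
          have "bvec (k # mu) = L n (bvec mu)" using bvec_Cons[OF pk] ik by simp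
          moreover have "degp d (k # mu) = int T"
            using dT by (simp add: degp_Cons degpart_dg[OF k1] ik)
          ultimately show ?thesis using FF_bvec[OF pk, of d "int T"] by simp
        next
          case False
          then obtain k mu' where mu_eq: "mu = k # mu'" and nk: "2 - int k < n"
            by (cases mu) auto
          define a where "a = 2 - int k"
          have pm': "is_partition mu'" and k1: "1 \<le> k" using mu mu_eq by (auto simp: is_partition_Cons)
          have a1: "a \<le> 1" "a < n" using k1 nk by (auto simp: a_def)
          have fv: "fin_vec (bvec mu')" using fin_vec_bvec[OF pm'] .
          have bv: "bvec mu = L a (bvec mu')" using bvec_Cons mu mu_eq a_def by simp
          have dmu: "degp d mu = dg d a + degp d mu'"
            using mu_eq by (simp add: degp_Cons degpart_dg[OF k1] a_def)
          have ga: "1 \<le> dg d a" using dg_ge1[OF d1 a1(1)] .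
          have gn: "1 \<le> dg d n" using dg_ge1[OF d1 n1] .
          have dm': "0 \<le> degp d mu'" using degp_nonneg[OF pm'] .
          define C where "C = (if n + a = 0 then c / 12 * (of_int n ^ 3 - of_int n) else 0)"
          have eq: "L n (bvec mu) = (\<lambda>nu. L a (L n (bvec mu')) nu + of_int (n - a) * L (n + a) (bvec mu') nu
              + C * bvec mu' nu)"
            unfolding bv C_def by (rule comm[OF fv])
          have F1: "FF d (degp d mu' + dg d n) (L n (bvec mu'))"
            using IH[OF pm' n1] dT dmu ga by linarith
          have t1: "FF d (degp d mu' + dg d n + dg d a) (L a (L n (bvec mu')))"
          proof (rule lin_F[OF linL F1])
            fix nu assume nu: "is_partition nu" "degp d nu \<le> degp d mu' + dg d n"
            show "FF d (degp d nu + dg d a) (L a (bvec nu))"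
              using IH[OF nu(1) a1(1)] nu(2) dT dmu a1(2) by linarith
          qed
          have t1': "FF d (int T) (L a (L n (bvec mu')))"
            using t1 dT dmu by (simp add: algebra_simps)
          have na: "n + a \<le> 1" using a1 n1 by linarith
          have dc: "dg d (n + a) \<le> dg d n + dg d a \<and> (dg d (n + a) = dg d n + dg d a \<longrightarrow> a < 0)"
            using dg_comm[OF d12 n1 a1(2)] .
          have t2: "FF d (degp d mu' + dg d (n + a)) (L (n + a) (bvec mu'))"
            using IH[OF pm' na] dc dT dmu by linarith
          have t2': "FF d (int T) (L (n + a) (bvec mu'))"
            by (rule FF_mono[OF t2]) (use dc dT dmu in linarith)
          have t3: "FF d (int T) (bvec mu')"
            by (rule FF_bvec[OF pm']) (use dT dmu ga gn in linarith)
          show ?thesis unfolding eq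
            by (intro FF_add FF_scale t1' t2' t3)
        qed
      qed
    qed
    show ?case using inner by blast
  qed
  assume mu: "is_partition mu" and n1: "n \<le> 1"
  have pos: "0 \<le> degp d mu + dg d n"
    using degp_nonneg[OF mu, of d] dg_ge1[OF d1 n1] by linarith
  show ?thesis using main[of "nat (degp d mu + dg d n)"] mu n1 pos by simp
qed

lemma RF: "FF d D x \<Longrightarrow> n \<le> 1 \<Longrightarrow> FF d (D + dg d n) (L n x)"
  by (rule lin_F[OF linL]) (auto intro: R_basis)


lemma dd_a: "2 \<le> m \<Longrightarrow> a \<le> 1 \<Longrightarrow> 2 \<le> m + a \<Longrightarrow> LamF La2 La3 La4 (m + a) \<noteq> 0 \<Longrightarrow> dd d m \<le> dg d a"
proof -
  assume h: "2 \<le> m" "a \<le> 1" "2 \<le> m + a" "LamF La2 La3 La4 (m + a) \<noteq> 0"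
  then have "m + a = 2 \<or> (m + a = 3 \<and> La3 \<noteq> 0) \<or> m + a = 4"
    by (auto simp: LamF_def split: if_splits)
  then show ?thesis using Dh h by (auto simp: dd_def dg_def)
qed

lemma dd_b: "2 \<le> m \<Longrightarrow> a \<le> 1 \<Longrightarrow> 2 \<le> m + a \<Longrightarrow> dd d m \<le> dg d a + dd d (m + a)"
  using Dh by (auto simp: dd_def dg_def)

lemma dd_c: "2 \<le> m \<Longrightarrow> m + a \<le> 1 \<Longrightarrow> dg d (m + a) \<le> dg d a - dd d m"
  using Dh by (auto simp: dd_def dg_def)

lemma dd_d: "2 \<le> m \<Longrightarrow> m + a = 0 \<Longrightarrow> dd d m \<le> dg d a"
  using Dh by (auto simp: dd_def dg_def)

lemma A_basis: "is_partition lam \<Longrightarrow> \<forall>m\<ge>2. FF d (degp d lam - dd d m)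
    (\<lambda>mu. L m (bvec lam) mu - LamF La2 La3 La4 m * bvec lam mu)"
proof (induction lam)
  case Nil
  show ?case
  proof (intro allI impI)
    fix m :: int assume "2 \<le> m"
    then have "(\<lambda>mu. L m (bvec []) mu - LamF La2 La3 La4 m * bvec [] mu) = (\<lambda>mu. 0)"
      using LJ by simp
    then show "FF d (degp d [] - dd d m) (\<lambda>mu. L m (bvec []) mu - LamF La2 La3 La4 m * bvec [] mu)"
      using FF_zero by simp
  qed
next
  case (Cons k lam')
  have pl: "is_partition lam'" and k1: "1 \<le> k" using Cons.prems by (auto simp: is_partition_Cons)
  note IH = Cons.IH[OF pl]
  define a where "a = 2 - int k"
  have a1: "a \<le> 1" using k1 by (simp add: a_def)
  define v where "v = bvec lam'"
  have fv: "fin_vec v" using fin_vec_bvec[OF pl] by (simp add: v_def)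
  have bv: "bvec (k # lam') = L a v" using bvec_Cons Cons.prems a_def v_def by simp
  have dl: "degp d (k # lam') = dg d a + degp d lam'"
    by (simp add: degp_Cons degpart_dg[OF k1] a_def)
  show ?case
  proof (intro allI impI)
    fix m :: int assume m2: "2 \<le> m"
    define Lm where "Lm = LamF La2 La3 La4 m"
    define Y where "Y = (\<lambda>mu. L m v mu - Lm * v mu)"
    define C where "C = (if m + a = 0 then c / 12 * (of_int m ^ 3 - of_int m) else 0)"
    have FY: "FF d (degp d lam' - dd d m) Y" using IH m2 by (simp add: Y_def Lm_def v_def)
    have fLm: "fin_vec (L m v)" using lin_fin[OF linL fv] .
    have LY: "L a Y = (\<lambda>mu. L a (L m v) mu + (- Lm) * L a v mu)"
    proof -
      have "Y = (\<lambda>mu. L m v mu + (- Lm) * v mu)" by (simp add: Y_def)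
      then have "L a Y = L a (\<lambda>mu. L m v mu + (- Lm) * v mu)" by simp
      also have "\<dots> = (\<lambda>mu. L a (L m v) mu + L a (\<lambda>mu. (- Lm) * v mu) mu)"
        by (rule lin_add[OF linL fLm fin_vec_scale[OF fv]])
      also have "\<dots> = (\<lambda>mu. L a (L m v) mu + (- Lm) * L a v mu)"
        by (simp only: lin_scale[OF linL fv])
      finally show ?thesis .
    qed
    have cm: "L m (L a v) = (\<lambda>mu. L a (L m v) mu + of_int (m - a) * L (m + a) v mu + C * v mu)"
      unfolding C_def by (rule comm[OF fv])
    have eq: "(\<lambda>mu. L m (bvec (k # lam')) mu - Lm * bvec (k # lam') mu)
       = (\<lambda>mu. L a Y mu + of_int (m - a) * L (m + a) v mu + C * v mu)"
      unfolding bv LY cm by (rule ext) (simp add: algebra_simps)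
    have t1: "FF d (degp d (k # lam') - dd d m) (L a Y)"
      using RF[OF FY a1] dl by (simp add: algebra_simps)
    have t2: "FF d (degp d (k # lam') - dd d m) (L (m + a) v)"
    proof (cases "2 \<le> m + a")
      case True
      define Lm' where "Lm' = LamF La2 La3 La4 (m + a)"
      have e2: "L (m + a) v = (\<lambda>mu. (L (m + a) v mu - Lm' * v mu) + Lm' * v mu)" by simp
      have s1: "FF d (degp d lam' - dd d (m + a)) (\<lambda>mu. L (m + a) v mu - Lm' * v mu)"
        using IH True by (simp add: Lm'_def v_def)
      have s1': "FF d (degp d (k # lam') - dd d m) (\<lambda>mu. L (m + a) v mu - Lm' * v mu)"
        by (rule FF_mono[OF s1]) (use dd_b[OF m2 a1 True] dl in linarith)
      have s2: "FF d (degp d (k # lam') - dd d m) (\<lambda>mu. Lm' * v mu)"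
      proof (cases "Lm' = 0")
        case True then show ?thesis using FF_zero by simp
      next
        case False
        have "dd d m \<le> dg d a" using dd_a[OF m2 a1 \<open>2 \<le> m + a\<close>] False by (simp add: Lm'_def)
        then have "FF d (degp d (k # lam') - dd d m) v"
          unfolding v_def by (intro FF_bvec pl) (use dl in linarith)
        then show ?thesis by (rule FF_scale)
      qed
      show ?thesis by (subst e2) (rule FF_add[OF s1' s2])
    next
      case False
      then have ma: "m + a \<le> 1" by linarith
      show ?thesis
        by (rule FF_mono[OF RF[OF FF_bvec[OF pl order_refl] ma, folded v_def]])
           (use dd_c[OF m2 ma] dl in linarith)
    qed
    have t3: "FF d (degp d (k # lam') - dd d m) (\<lambda>mu. C * v mu)"
    proof (cases "m + a = 0")
      case True
      then have "FF d (degp d (k # lam') - dd d m) v"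
        unfolding v_def by (intro FF_bvec pl) (use dd_d[OF m2 True] dl in linarith)
      then show ?thesis by (rule FF_scale)
    next
      case False then show ?thesis using FF_zero by (simp add: C_def)
    qed
    show "FF d (degp d (k # lam') - dd d m)
       (\<lambda>mu. L m (bvec (k # lam')) mu - LamF La2 La3 La4 m * bvec (k # lam') mu)"
      unfolding Lm_def[symmetric] eq by (intro FF_add FF_scale t1 t2 t3)
  qed
qed

lemma AF: "FF d D x \<Longrightarrow> 2 \<le> m \<Longrightarrow>
   FF d (D - dd d m) (\<lambda>mu. L m x mu - LamF La2 La3 La4 m * x mu)"
proof -
  assume x: "FF d D x" and m: "2 \<le> m"
  have "FF d (D + - dd d m) ((\<lambda>x mu. L m x mu - LamF La2 La3 La4 m * x mu) x)"
    by (rule lin_F[OF lin_sub[OF linL] x]) (use A_basis m in simp)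
  then show ?thesis by simp
qed

lemma Lt_eq: "3 \<le> m \<Longrightarrow> Lt La3 La4 L m x = (\<lambda>mu. L m x mu - LamF La2 La3 La4 m * x mu)"
  by (auto simp: Lt_def LamF_def)

lemma LP: "FF d D x \<Longrightarrow> \<forall>k\<in>set mu. 1 \<le> k \<Longrightarrow> FF d (D - degp d mu) (Lt_prod La3 La4 L mu x)"
proof (induction mu)
  case Nil then show ?case by (simp add: Lt_prod_def degp_def)
next
  case (Cons k mu)
  have k1: "1 \<le> k" using Cons.prems by simp
  have F: "FF d (D - degp d mu) (Lt_prod La3 La4 L mu x)" using Cons by simp
  have "Lt_prod La3 La4 L (k # mu) x = Lt La3 La4 L (int k + 2) (Lt_prod La3 La4 L mu x)"
    by (simp add: Lt_prod_def)
  also have "\<dots> = (\<lambda>nu. L (int k + 2) (Lt_prod La3 La4 L mu x) nu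
      - LamF La2 La3 La4 (int k + 2) * Lt_prod La3 La4 L mu x nu)"
    by (rule Lt_eq) (use k1 in simp)
  finally have e: "Lt_prod La3 La4 L (k # mu) x = \<dots>" .
  have "dd d (int k + 2) = degpart d k" using k1 by (auto simp: dd_def degpart_def)
  then show ?case unfolding e using AF[OF F, of "int k + 2"] by (simp add: degp_Cons algebra_simps)
qed

end

theorem lemmaA8:
  fixes c La2 La3 La4 :: complex and L :: "int \<Rightarrow> vec \<Rightarrow> vec" and d :: nat
  assumes "whittaker_module c La2 La3 La4 L"
    and "La4 \<noteq> 0"
    and "d = 1 \<or> (d = 2 \<and> La3 = 0)"
  shows "(\<forall>lam j. is_partition lam \<longrightarrow> 1 \<le> j \<longrightarrow>
            Lt La3 La4 L (2 + int j) (bvec lam) \<noteq> (\<lambda>mu. 0) \<longrightarrow>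
            vdeg d (Lt La3 La4 L (2 + int j) (bvec lam)) \<le> degp d lam - degpart d j)
       \<and> (\<forall>lam mu. is_partition lam \<longrightarrow> is_partition mu \<longrightarrow>
            degp d mu > degp d lam \<longrightarrow> Lt_prod La3 La4 L mu (bvec lam) = (\<lambda>nu. 0))"
proof (intro conjI allI impI)
  note W = assms(1) and Dh = assms(3)
  fix lam j assume p: "is_partition lam" and j: "1 \<le> j"
    and nz: "Lt La3 La4 L (2 + int j) (bvec lam) \<noteq> (\<lambda>mu. 0)"
  define y where "y = Lt La3 La4 L (2 + int j) (bvec lam)"
  have m3: "3 \<le> 2 + int j" using j by simp
  have m2: "2 \<le> 2 + int j" using j by simp
  have F: "FF d (degp d lam - dd d (2 + int j)) y"
    using A_basis[OF W Dh p] m2 unfolding y_def Lt_eq[OF W Dh m3] by blast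
  have ddj: "dd d (2 + int j) = degpart d j" using j by (auto simp: dd_def degpart_def)
  have fin: "finite {mu. y mu \<noteq> 0}" using F by (simp add: FF_def fin_vec_def)
  have ne: "{mu. y mu \<noteq> 0} \<noteq> {}" using nz unfolding y_def[symmetric] by auto
  have "\<forall>a\<in>degp d ` {mu. y mu \<noteq> 0}. a \<le> degp d lam - degpart d j"
    using F ddj by (auto simp: FF_def)
  then have "Max (degp d ` {mu. y mu \<noteq> 0}) \<le> degp d lam - degpart d j"
    using fin ne by (simp add: Max_le_iff)
  then show "vdeg d (Lt La3 La4 L (2 + int j) (bvec lam)) \<le> degp d lam - degpart d j"
    unfolding y_def[symmetric] vdeg_def .
next
  note W = assms(1) and Dh = assms(3)
  fix lam mu assume p: "is_partition lam" and q: "is_partition mu" and g: "degp d mu > degp d lam"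
  have F0: "FF d (degp d lam) (bvec lam)" by (rule FF_bvec[OF p order_refl])
  have k1: "\<forall>k\<in>set mu. 1 \<le> k" using q by (simp add: is_partition_def)
  have "FF d (degp d lam - degp d mu) (Lt_prod La3 La4 L mu (bvec lam))"
    by (rule LP[OF W Dh F0 k1])
  then show "Lt_prod La3 La4 L mu (bvec lam) = (\<lambda>nu. 0)"
    by (rule FF_zero_neg) (use g in linarith)
qed

end
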